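(* Fix a basis $\{b_1,\ldots,b_d\}$ of $\mathbb{R}^d$. For each $I\subseteq [d]=\{1,\dots,d\}$, let $p_I:\mathbb{R}^d\to \mathbb{R}^I$ be the projection onto the span of $\{b_i\}_{i\in I}$ along the given basis (i.e. $p_I(\sum_i x_ib_i)=\sum_{i\in I}x_ib_i$). Then, for any non-empty finite subsets $A,B$ of $\mathbb{R}^d$, $$|A+B|\geq \left(|A|^{1/d}+|B|^{1/d}\right)^d-\sum_{I\subsetneq [d]}|p_I(A+B)|.$$ *)

theory Defs
  imports "HOL-Analysis.Analysis"
begin

definition basis_proj :: "('n::finite \<Rightarrow> real^'n) \<Rightarrow> 'n set \<Rightarrow> real^'n \<Rightarrow> real^'n" where
  "basis_proj b I x = (\<Sum>i\<in>I. representation (range b) x (b i) *\<^sub>R b i)"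

end

theory Submission
  imports Defs "HOL-Library.Function_Algebras"
begin


definition sumset :: "'a::plus set \<Rightarrow> 'a set \<Rightarrow> 'a set" where
  "sumset A B = {a + c | a c. a \<in> A \<and> c \<in> B}"

lemma finite_sumset: "finite A \<Longrightarrow> finite B \<Longrightarrow> finite (sumset A B)"
proof -
  assume "finite A" "finite B"
  have "sumset A B = (\<lambda>(a,c). a + c) ` (A \<times> B)" unfolding sumset_def by auto
  thus ?thesis using \<open>finite A\<close> \<open>finite B\<close> by simp
qed

lemma sumset_ne: "A \<noteq> {} \<Longrightarrow> B \<noteq> {} \<Longrightarrow> sumset A B \<noteq> {}"
  unfolding sumset_def by auto

lemma cd:
  fixes X Y :: "real set"
  assumes "finite X" "finite Y" "X \<noteq> {}" "Y \<noteq> {}"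
  shows "card X + card Y \<le> card (sumset X Y) + 1"
  using assms(1,3)
proof (induction X rule: finite_linorder_max_induct)
  case empty
  then show ?case by simp
next
  case (insert b A)
  show ?case
  proof (cases "A = {}")
    case True
    have "sumset {b} Y = (\<lambda>y. b + y) ` Y" unfolding sumset_def by auto
    moreover have "card ((\<lambda>y. b + y) ` Y) = card Y" by (rule card_image) (simp add: inj_on_def)
    ultimately show ?thesis using True by simp
  next
    case False
    have IH: "card A + card Y \<le> card (sumset A Y) + 1" using insert False by auto
    define m where "m = Max Y"
    have mY: "m \<in> Y" using assms m_def by simp
    have "\<forall>y\<in>Y. y \<le> m" using assms m_def by simp
    have notin: "b + m \<notin> sumset A Y"
    proof
      assume "b + m \<in> sumset A Y"
      then obtain a c where "a \<in> A" "c \<in> Y" "b + m = a + c" unfolding sumset_def by auto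
      with insert.hyps(2) \<open>\<forall>y\<in>Y. y \<le> m\<close> show False by (metis add_less_le_mono less_irrefl)
    qed
    have sub: "insert (b + m) (sumset A Y) \<subseteq> sumset (insert b A) Y"
      unfolding sumset_def using mY by auto
    have "card (insert (b + m) (sumset A Y)) \<le> card (sumset (insert b A) Y)"
      by (rule card_mono[OF finite_sumset sub]) (use insert assms in auto)
    moreover have "card (insert (b + m) (sumset A Y)) = card (sumset A Y) + 1"
      using notin finite_sumset[OF insert(1) assms(2)] by simp
    moreover have "card (insert b A) = card A + 1"
      using insert by auto
    ultimately show ?thesis using IH by linarith
  qed
qed

lemma lq:
  fixes X Y :: "real set" and f g h :: "real \<Rightarrow> real" and T :: real
  shows "finite X \<Longrightarrow> finite Y \<Longrightarrow> X \<noteq> {} \<Longrightarrow> Y \<noteq> {} \<Longrightarrow>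
    (\<forall>x\<in>X. 0 \<le> f x \<and> f x \<le> T) \<Longrightarrow> (\<forall>y\<in>Y. 0 \<le> g y \<and> g y \<le> T) \<Longrightarrow>
    (\<exists>x\<in>X. f x = T) \<Longrightarrow> (\<exists>y\<in>Y. g y = T) \<Longrightarrow>
    (\<forall>x\<in>X. \<forall>y\<in>Y. min (f x) (g y) \<le> h (x + y)) \<Longrightarrow>
    sum f X + sum g Y - T \<le> sum h (sumset X Y)"
proof (induction "card X + card Y" arbitrary: X Y f g h T rule: less_induct)
  case less
  note fX = less.prems(1) and fY = less.prems(2) and neX = less.prems(3) and neY = less.prems(4)
  define t where "t = Min (f ` X \<union> g ` Y)"
  have finU: "finite (f ` X \<union> g ` Y)" using fX fY by simp
  have neU: "f ` X \<union> g ` Y \<noteq> {}" using neX by simp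
  have tin: "t \<in> f ` X \<union> g ` Y" unfolding t_def using finU neU by (rule Min_in)
  have tle: "\<forall>x\<in>X. t \<le> f x" "\<forall>y\<in>Y. t \<le> g y" unfolding t_def using finU by auto
  have t0: "0 \<le> t" using tin less.prems(5,6) by auto
  obtain x0 where x0: "x0 \<in> X" "f x0 = T" using less.prems(7) by auto
  obtain y0 where y0: "y0 \<in> Y" "g y0 = T" using less.prems(8) by auto
  have tT: "t \<le> T" using tle x0 by auto
  have hge: "\<forall>z\<in>sumset X Y. t \<le> h z"
  proof
    fix z assume "z \<in> sumset X Y"
    then obtain x y where "x \<in> X" "y \<in> Y" "z = x + y" unfolding sumset_def by auto
    thus "t \<le> h z" using less.prems(9) tle by (metis min.bounded_iff order_trans)
  qed
  have cdXY: "real (card X) + real (card Y) \<le> real (card (sumset X Y)) + 1"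
    using cd[OF fX fY neX neY] by linarith
  show ?case
  proof (cases "t = T")
    case True
    have "\<forall>x\<in>X. f x = T" using tle less.prems(5) True by force
    hence sf: "sum f X = real (card X) * T" by simp
    have "\<forall>y\<in>Y. g y = T" using tle less.prems(6) True by force
    hence sg: "sum g Y = real (card Y) * T" by simp
    have "sum (\<lambda>z. T) (sumset X Y) \<le> sum h (sumset X Y)"
      using hge True by (intro sum_mono) auto
    hence sh: "real (card (sumset X Y)) * T \<le> sum h (sumset X Y)" by simp
    have "(real (card X) + real (card Y)) * T \<le> (real (card (sumset X Y)) + 1) * T"
      using cdXY t0 True by (intro mult_right_mono) auto
    then show ?thesis using sf sg sh by (simp add: algebra_simps)
  next
    case False
    hence tlt: "t < T" using tT by simp
    define X' where "X' = {x\<in>X. t < f x}"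
    define Y' where "Y' = {y\<in>Y. t < g y}"
    have X'X: "X' \<subseteq> X" and Y'Y: "Y' \<subseteq> Y" unfolding X'_def Y'_def by auto
    have fX': "finite X'" "finite Y'" using X'X Y'Y fX fY finite_subset by auto
    have neX': "X' \<noteq> {}" using x0 tlt unfolding X'_def by auto
    have neY': "Y' \<noteq> {}" using y0 tlt unfolding Y'_def by auto
    have lesscard: "card X' + card Y' < card X + card Y"
    proof -
      have c1: "card X' \<le> card X" "card Y' \<le> card Y"
        using X'X Y'Y fX fY by (auto intro: card_mono)
      from tin show ?thesis
      proof
        assume "t \<in> f ` X"
        then obtain x1 where "x1 \<in> X" "f x1 = t" by auto
        hence "X' \<subset> X" using X'X unfolding X'_def by auto
        hence "card X' < card X" using fX by (simp add: psubset_card_mono)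
        thus ?thesis using c1 by linarith
      next
        assume "t \<in> g ` Y"
        then obtain y1 where "y1 \<in> Y" "g y1 = t" by auto
        hence "Y' \<subset> Y" using Y'Y unfolding Y'_def by auto
        hence "card Y' < card Y" using fY by (simp add: psubset_card_mono)
        thus ?thesis using c1 by linarith
      qed
    qed
    have IH: "sum (\<lambda>x. f x - t) X' + sum (\<lambda>y. g y - t) Y' - (T - t)
        \<le> sum (\<lambda>z. h z - t) (sumset X' Y')"
    proof (rule less.hyps[OF lesscard fX' neX' neY'])
      show "\<forall>x\<in>X'. 0 \<le> f x - t \<and> f x - t \<le> T - t" using less.prems(5) X'_def by auto
      show "\<forall>y\<in>Y'. 0 \<le> g y - t \<and> g y - t \<le> T - t" using less.prems(6) Y'_def by auto
      show "\<exists>x\<in>X'. f x - t = T - t" using x0 tlt X'_def by auto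
      show "\<exists>y\<in>Y'. g y - t = T - t" using y0 tlt Y'_def by auto
      show "\<forall>x\<in>X'. \<forall>y\<in>Y'. min (f x - t) (g y - t) \<le> h (x + y) - t"
        using less.prems(9) X'X Y'Y by fastforce
    qed
    have e1: "sum (\<lambda>x. f x - t) X = sum (\<lambda>x. f x - t) X'"
      by (rule sum.mono_neutral_right[OF fX X'X]) (use tle in \<open>auto simp: X'_def\<close>)
    have e2: "sum (\<lambda>y. g y - t) Y = sum (\<lambda>y. g y - t) Y'"
      by (rule sum.mono_neutral_right[OF fY Y'Y]) (use tle in \<open>auto simp: Y'_def\<close>)
    have ss: "sumset X' Y' \<subseteq> sumset X Y" using X'X Y'Y unfolding sumset_def by blast
    have e3: "sum (\<lambda>z. h z - t) (sumset X' Y') \<le> sum (\<lambda>z. h z - t) (sumset X Y)"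
      by (rule sum_mono2[OF finite_sumset[OF fX fY] ss]) (use hge in auto)
    have sf: "sum f X = sum (\<lambda>x. f x - t) X + real (card X) * t"
      by (simp add: sum_subtractf)
    have sg: "sum g Y = sum (\<lambda>y. g y - t) Y + real (card Y) * t"
      by (simp add: sum_subtractf)
    have sh: "sum h (sumset X Y) = sum (\<lambda>z. h z - t) (sumset X Y) + real (card (sumset X Y)) * t"
      by (simp add: sum_subtractf)
    have "(real (card X) + real (card Y)) * t \<le> (real (card (sumset X Y)) + 1) * t"
      using cdXY t0 by (intro mult_right_mono) auto
    then show ?thesis using IH e1 e2 e3 sf sg sh by (simp add: algebra_simps)
  qed
qed



lemma tangent:
  fixes x y :: real assumes "0 \<le> x" "0 < y"
  shows "real (Suc k) * x - real k * y \<le> x ^ Suc k / y ^ k"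
proof -
  define t where "t = x / y"
  have "1 + real (Suc k) * (t - 1) \<le> (1 + (t - 1)) ^ Suc k"
    by (rule Bernoulli_inequality) (use assms in \<open>simp add: t_def\<close>)
  hence B: "1 + real (Suc k) * (t - 1) \<le> t ^ Suc k" by simp
  have "x ^ Suc k / y ^ k = y * t ^ Suc k" using assms
    by (simp add: t_def power_divide field_simps)
  moreover have "y * (1 + real (Suc k) * (t - 1)) = real (Suc k) * x - real k * y"
    using assms by (simp add: t_def field_simps)
  ultimately show ?thesis using B assms
    by (metis mult_left_mono less_imp_le)
qed

lemma conv:
  fixes F G th0 th :: real
  assumes "0 \<le> F" "0 \<le> G" "0 < th0" "th0 < 1" "0 < th" "th < 1"
  shows "min (F / th ^ Suc k) (G / (1 - th) ^ Suc k) \<le> F / th0 ^ k + G / (1 - th0) ^ k"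
proof -
  define m where "m = min (F / th ^ Suc k) (G / (1 - th) ^ Suc k)"
  have m0: "0 \<le> m" unfolding m_def using assms by simp
  have "m * th ^ Suc k \<le> F / th ^ Suc k * th ^ Suc k"
    using assms unfolding m_def by (intro mult_right_mono) auto
  hence "m * th ^ Suc k \<le> F" using assms by simp
  hence F1: "m * (th ^ Suc k / th0 ^ k) \<le> F / th0 ^ k"
    using assms by (simp add: divide_right_mono)
  have "m * (1 - th) ^ Suc k \<le> G / (1 - th) ^ Suc k * (1 - th) ^ Suc k"
    using assms unfolding m_def by (intro mult_right_mono) auto
  hence "m * (1 - th) ^ Suc k \<le> G" using assms by simp
  hence G1: "m * ((1 - th) ^ Suc k / (1 - th0) ^ k) \<le> G / (1 - th0) ^ k"
    using assms by (simp add: divide_right_mono)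
  have t1: "real (Suc k) * th - real k * th0 \<le> th ^ Suc k / th0 ^ k"
    using tangent assms by simp
  have t2: "real (Suc k) * (1 - th) - real k * (1 - th0) \<le> (1 - th) ^ Suc k / (1 - th0) ^ k"
    using tangent assms by simp
  have "1 \<le> th ^ Suc k / th0 ^ k + (1 - th) ^ Suc k / (1 - th0) ^ k"
    using t1 t2 by (simp add: algebra_simps)
  hence "m \<le> m * (th ^ Suc k / th0 ^ k + (1 - th) ^ Suc k / (1 - th0) ^ k)"
    using m0 by (metis mult_left_mono mult.right_neutral)
  thus ?thesis using F1 G1 unfolding m_def by (simp add: algebra_simps)
qed

lemma bal:
  fixes a b :: real
  assumes "0 < a" "0 < b" "0 < d"
  defines "ra \<equiv> a powr (1 / real d)" and "rb \<equiv> b powr (1 / real d)"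
  shows "0 < ra / (ra + rb) \<and> ra / (ra + rb) < 1 \<and>
         a / (ra / (ra + rb)) ^ d = (ra + rb) ^ d \<and>
         b / (1 - ra / (ra + rb)) ^ d = (ra + rb) ^ d"
proof -
  have ra0: "0 < ra" and rb0: "0 < rb" using assms by auto
  have pa: "ra ^ d = a" unfolding ra_def using assms
    by (simp add: powr_realpow [symmetric] powr_powr)
  have pb: "rb ^ d = b" unfolding rb_def using assms
    by (simp add: powr_realpow [symmetric] powr_powr)
  have e: "1 - ra / (ra + rb) = rb / (ra + rb)" using ra0 rb0 by (simp add: field_simps)
  show ?thesis using ra0 rb0 pa pb assms(1,2)
    by (simp add: e power_divide field_simps)
qed



definition restr :: "'n set \<Rightarrow> ('n \<Rightarrow> real) \<Rightarrow> ('n \<Rightarrow> real)" where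
  "restr I x = (\<lambda>i. if i \<in> I then x i else 0)"
definition supp :: "'n set \<Rightarrow> ('n \<Rightarrow> real) set" where
  "supp D = {x. \<forall>i. i \<notin> D \<longrightarrow> x i = 0}"
definition TT :: "'n set \<Rightarrow> ('n \<Rightarrow> real) set \<Rightarrow> real" where
  "TT D S = (\<Sum>I\<in>Pow D. real (card (restr I ` S)))"
definition fib :: "('n \<Rightarrow> real) set \<Rightarrow> 'n \<Rightarrow> real \<Rightarrow> ('n \<Rightarrow> real) set" where
  "fib S j z = {x\<in>S. x j = z}"

lemma TT_nonneg: "0 \<le> TT D S"
  unfolding TT_def by (simp add: sum_nonneg)

lemma TT_mono: "finite S' \<Longrightarrow> S \<subseteq> S' \<Longrightarrow> TT D S \<le> TT D S'"
  unfolding TT_def by (intro sum_mono) (auto intro: card_mono)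

lemma restr_restr: "I \<subseteq> D \<Longrightarrow> restr I (restr D x) = restr I x"
  unfolding restr_def by (auto simp: fun_eq_iff)

lemma TT_restr: "TT D (restr D ` S) = TT D S"
  unfolding TT_def by (intro sum.cong refl) (simp add: image_image restr_restr)

lemma restr_add: "restr I (x + y) = restr I x + restr I y"
  unfolding restr_def by auto

lemma TT_insert:
  assumes "finite D'" "j \<notin> D'"
  shows "TT (insert j D') S = TT D' S + (\<Sum>I\<in>Pow D'. real (card (restr (insert j I) ` S)))"
proof -
  have "Pow (insert j D') = Pow D' \<union> insert j ` Pow D'" by (rule Pow_insert)
  moreover have "Pow D' \<inter> insert j ` Pow D' = {}" using assms by auto
  moreover have "inj_on (insert j) (Pow D')" using assms unfolding inj_on_def
    by (metis Pow_iff insert_absorb insert_ident subset_iff)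
  ultimately show ?thesis unfolding TT_def using assms
    by (simp add: sum.union_disjoint sum.reindex)
qed

lemma fiber_card:
  assumes "finite S" "j \<notin> I"
  shows "card (restr (insert j I) ` S) = (\<Sum>z\<in>(\<lambda>x. x j) ` S. card (restr I ` fib S j z))"
proof -
  have U: "restr (insert j I) ` S = (\<Union>z\<in>(\<lambda>x. x j) ` S. restr (insert j I) ` fib S j z)"
    unfolding fib_def by auto
  have "card (restr (insert j I) ` S) = (\<Sum>z\<in>(\<lambda>x. x j) ` S. card (restr (insert j I) ` fib S j z))"
    unfolding U
  proof (rule card_UN_disjoint)
    show "finite ((\<lambda>x. x j) ` S)" using assms by simp
    show "\<forall>i\<in>(\<lambda>x. x j) ` S. finite (restr (insert j I) ` fib S j i)" using assms by (simp add: fib_def)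
    show "\<forall>i\<in>(\<lambda>x. x j) ` S. \<forall>k\<in>(\<lambda>x. x j) ` S. i \<noteq> k \<longrightarrow>
        restr (insert j I) ` fib S j i \<inter> restr (insert j I) ` fib S j k = {}"
      unfolding fib_def restr_def by (auto simp: fun_eq_iff) (metis)
  qed
  also have "\<dots> = (\<Sum>z\<in>(\<lambda>x. x j) ` S. card (restr I ` fib S j z))"
  proof (rule sum.cong[OF refl])
    fix z
    have e: "restr I ` fib S j z = (\<lambda>y. y(j := 0)) ` (restr (insert j I) ` fib S j z)"
      unfolding image_image using assms(2) by (intro image_cong refl) (auto simp: restr_def)
    have "inj_on (\<lambda>y. y(j := 0)) (restr (insert j I) ` fib S j z)"
      unfolding inj_on_def fib_def restr_def
      by (auto simp: fun_eq_iff)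
    thus "card (restr (insert j I) ` fib S j z) = card (restr I ` fib S j z)"
      unfolding e by (simp add: card_image)
  qed
  finally show ?thesis .
qed

lemma TT_split:
  assumes "finite D'" "j \<notin> D'" "finite S"
  shows "TT (insert j D') S = TT D' S + (\<Sum>z\<in>(\<lambda>x. x j) ` S. TT D' (fib S j z))"
proof -
  have "(\<Sum>I\<in>Pow D'. real (card (restr (insert j I) ` S)))
      = (\<Sum>I\<in>Pow D'. \<Sum>z\<in>(\<lambda>x. x j) ` S. real (card (restr I ` fib S j z)))"
  proof (intro sum.cong refl)
    fix I assume "I \<in> Pow D'"
    hence "j \<notin> I" using assms by auto
    thus "real (card (restr (insert j I) ` S)) = (\<Sum>z\<in>(\<lambda>x. x j) ` S. real (card (restr I ` fib S j z)))"
      using fiber_card[OF assms(3)] by simp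
  qed
  also have "\<dots> = (\<Sum>z\<in>(\<lambda>x. x j) ` S. TT D' (fib S j z))"
    unfolding TT_def by (rule sum.swap)
  finally show ?thesis using TT_insert[OF assms(1,2)] by simp
qed

lemma card_fibers:
  assumes "finite A"
  shows "(\<Sum>z\<in>(\<lambda>x. x j) ` A. card (fib A j z)) = card A"
proof -
  have U: "A = (\<Union>z\<in>(\<lambda>x. x j) ` A. fib A j z)" unfolding fib_def by auto
  have "card (\<Union>z\<in>(\<lambda>x. x j) ` A. fib A j z) = (\<Sum>z\<in>(\<lambda>x. x j) ` A. card (fib A j z))"
    by (rule card_UN_disjoint) (use assms in \<open>auto simp: fib_def\<close>)
  thus ?thesis using U by simp
qed

lemma card_restr_fib:
  assumes "A \<subseteq> supp (insert j D')"
  shows "card (restr D' ` fib A j z) = card (fib A j z)"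
proof (rule card_image)
  show "inj_on (restr D') (fib A j z)"
    unfolding inj_on_def
  proof (intro ballI impI)
    fix x y assume xy: "x \<in> fib A j z" "y \<in> fib A j z" "restr D' x = restr D' y"
    show "x = y"
    proof
      fix i
      show "x i = y i"
      proof (cases "i \<in> D'")
        case True then show ?thesis using xy(3) unfolding restr_def by (metis)
      next
        case False
        show ?thesis
        proof (cases "i = j")
          case True then show ?thesis using xy unfolding fib_def by auto
        next
          case False2: False
          have "x \<in> A" "y \<in> A" using xy unfolding fib_def by auto
          then have "x i = 0" "y i = 0" using assms False False2 unfolding supp_def by auto
          then show ?thesis by simp
        qed
      qed
    qed
  qed
qed



lemma supp_empty: "A \<subseteq> supp {} \<Longrightarrow> A \<noteq> {} \<Longrightarrow> card A = 1"
proof -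
  assume "A \<subseteq> supp {}" "A \<noteq> {}"
  hence "\<forall>x\<in>A. x = (\<lambda>i. 0)" unfolding supp_def by (auto simp: fun_eq_iff)
  hence "A = {\<lambda>i. 0}" using \<open>A \<noteq> {}\<close> by auto
  thus ?thesis by simp
qed

lemma TT_empty: "S \<noteq> {} \<Longrightarrow> TT {} S = 1"
proof -
  assume "S \<noteq> {}"
  hence "restr {} ` S = {\<lambda>i. 0}" unfolding restr_def by auto
  thus ?thesis unfolding TT_def by simp
qed

lemma core:
  assumes "finite D"
  shows "\<forall>A B. finite A \<longrightarrow> finite B \<longrightarrow> A \<noteq> {} \<longrightarrow> B \<noteq> {} \<longrightarrow>
     A \<subseteq> supp D \<longrightarrow> B \<subseteq> supp D \<longrightarrow>
     (\<forall>th. 0 < th \<longrightarrow> th < 1 \<longrightarrow>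
        min (real (card A) / th ^ card D) (real (card B) / (1 - th) ^ card D) \<le> TT D (sumset A B))"
  using assms
proof (induction D rule: finite_induct)
  case empty
  show ?case
  proof (intro allI impI)
    fix A B :: "('a \<Rightarrow> real) set" and th :: real
    assume "finite A" "finite B" "A \<noteq> {}" "B \<noteq> {}" "A \<subseteq> supp {}" "B \<subseteq> supp {}"
    then show "min (real (card A) / th ^ card {}) (real (card B) / (1 - th) ^ card {}) \<le> TT {} (sumset A B)"
    proof -
      have "card A = 1" "card B = 1" using supp_empty \<open>A \<subseteq> supp {}\<close> \<open>B \<subseteq> supp {}\<close> \<open>A \<noteq> {}\<close> \<open>B \<noteq> {}\<close> by auto
      moreover have "TT {} (sumset A B) = 1" using TT_empty[OF sumset_ne[OF \<open>A \<noteq> {}\<close> \<open>B \<noteq> {}\<close>]] .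
      ultimately show ?thesis by simp
    qed
  qed
next
  case (insert j D')
  define k where "k = card D'"
  have cardD: "card (insert j D') = Suc k" using insert k_def by simp
  show ?case
  proof (intro allI impI)
    fix A B :: "('a \<Rightarrow> real) set" and th :: real
    assume fA: "finite A" and fB: "finite B" and neA: "A \<noteq> {}" and neB: "B \<noteq> {}"
      and sA: "A \<subseteq> supp (insert j D')" and sB: "B \<subseteq> supp (insert j D')"
      and th: "0 < th" "th < 1"
    define S where "S = sumset A B"
    have fS: "finite S" unfolding S_def using fA fB by (rule finite_sumset)
    define X where "X = (\<lambda>x. x j) ` A"
    define Y where "Y = (\<lambda>x. x j) ` B"
    have fX: "finite X" "finite Y" using fA fB X_def Y_def by auto
    have neX: "X \<noteq> {}" "Y \<noteq> {}" using neA neB X_def Y_def by auto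
    define Af where "Af = (\<lambda>a. restr D' ` fib A j a)"
    define Bf where "Bf = (\<lambda>a. restr D' ` fib B j a)"
    define f where "f = (\<lambda>a. real (card (Af a)))"
    define g where "g = (\<lambda>a. real (card (Bf a)))"
    have Af_prop: "finite (Af a) \<and> Af a \<noteq> {} \<and> Af a \<subseteq> supp D'" if "a \<in> X" for a
      using that fA unfolding Af_def X_def fib_def supp_def restr_def by auto
    have Bf_prop: "finite (Bf a) \<and> Bf a \<noteq> {} \<and> Bf a \<subseteq> supp D'" if "a \<in> Y" for a
      using that fB unfolding Bf_def Y_def fib_def supp_def restr_def by auto
    have f1: "1 \<le> f a" if "a \<in> X" for a
      using Af_prop[OF that] unfolding f_def by (simp add: Suc_le_eq card_gt_0_iff)
    have g1: "1 \<le> g a" if "a \<in> Y" for a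
      using Bf_prop[OF that] unfolding g_def by (simp add: Suc_le_eq card_gt_0_iff)
    define Mf where "Mf = Max (f ` X)"
    define Mg where "Mg = Max (g ` Y)"
    have Mf_in: "Mf \<in> f ` X" unfolding Mf_def using fX neX by simp
    have Mg_in: "Mg \<in> g ` Y" unfolding Mg_def using fX neX by simp
    have Mf_ge: "\<forall>a\<in>X. f a \<le> Mf" unfolding Mf_def using fX by simp
    have Mg_ge: "\<forall>a\<in>Y. g a \<le> Mg" unfolding Mg_def using fX by simp
    have Mf0: "0 < Mf" using Mf_in f1 by force
    have Mg0: "0 < Mg" using Mg_in g1 by force
    obtain th0 where th0: "0 < th0" "th0 < 1" "Mf / th0 ^ k = Mg / (1 - th0) ^ k"
    proof (cases "k = 0")
      case True
      hence "D' = {}" using insert k_def by simp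
      hence "\<forall>a\<in>X. f a = 1" "\<forall>a\<in>Y. g a = 1"
        using Af_prop Bf_prop supp_empty unfolding f_def g_def by (metis of_nat_1)+
      hence "Mf = 1" "Mg = 1" using Mf_in Mg_in by auto
      thus ?thesis using that[of "1/2"] True by simp
    next
      case False
      thus ?thesis using bal[OF Mf0 Mg0, of k] that by auto
    qed
    define T where "T = Mf / th0 ^ k"
    define ft where "ft = (\<lambda>a. f a / th0 ^ k)"
    define gt where "gt = (\<lambda>a. g a / (1 - th0) ^ k)"
    define h where "h = (\<lambda>z. TT D' (fib S j z))"
    have IH: "min (ft a) (gt b) \<le> TT D' (sumset (Af a) (Bf b))" if "a \<in> X" "b \<in> Y" for a b
      using insert.IH Af_prop[OF that(1)] Bf_prop[OF that(2)] th0
      unfolding ft_def gt_def f_def g_def k_def by auto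
    have sub1: "sumset (Af a) (Bf b) \<subseteq> restr D' ` fib S j (a + b)" for a b
    proof
      fix z assume "z \<in> sumset (Af a) (Bf b)"
      then obtain x y where "x \<in> A" "y \<in> B" "x j = a" "y j = b" "z = restr D' x + restr D' y"
        unfolding sumset_def Af_def Bf_def fib_def by auto
      thus "z \<in> restr D' ` fib S j (a + b)"
        unfolding S_def sumset_def fib_def by (auto simp: restr_add intro!: image_eqI[of _ _ "x + y"])
    qed
    have key: "\<forall>a\<in>X. \<forall>b\<in>Y. min (ft a) (gt b) \<le> h (a + b)"
    proof (intro ballI)
      fix a b assume ab: "a \<in> X" "b \<in> Y"
      have "TT D' (sumset (Af a) (Bf b)) \<le> TT D' (restr D' ` fib S j (a + b))"
        by (rule TT_mono[OF _ sub1]) (use fS in \<open>simp add: fib_def\<close>)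
      thus "min (ft a) (gt b) \<le> h (a + b)" using IH[OF ab] unfolding h_def TT_restr by linarith
    qed
    have lqa: "sum ft X + sum gt Y - T \<le> sum h (sumset X Y)"
    proof (rule lq[OF fX neX])
      show "\<forall>x\<in>X. 0 \<le> ft x \<and> ft x \<le> T"
      proof
        fix x assume x: "x \<in> X"
        have p: "0 < th0 ^ k" using th0 by simp
        show "0 \<le> ft x \<and> ft x \<le> T" unfolding ft_def T_def
          using f1[OF x] Mf_ge x p by (auto intro!: divide_right_mono)
      qed
      show "\<forall>y\<in>Y. 0 \<le> gt y \<and> gt y \<le> T"
      proof
        fix x assume x: "x \<in> Y"
        have p: "0 < (1 - th0) ^ k" using th0 by simp
        show "0 \<le> gt x \<and> gt x \<le> T" unfolding gt_def T_def th0(3)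
          using g1[OF x] Mg_ge x p by (auto intro!: divide_right_mono)
      qed
      show "\<exists>x\<in>X. ft x = T" using Mf_in unfolding ft_def T_def by auto
      show "\<exists>y\<in>Y. gt y = T" using Mg_in th0 unfolding gt_def T_def by auto
      show "\<forall>x\<in>X. \<forall>y\<in>Y. min (ft x) (gt y) \<le> h (x + y)" by (rule key)
    qed
    have sXY: "sumset X Y \<subseteq> (\<lambda>x. x j) ` S"
      unfolding X_def Y_def S_def sumset_def by force
    have h2: "sum h (sumset X Y) \<le> sum h ((\<lambda>x. x j) ` S)"
      by (rule sum_mono2) (use fS sXY in \<open>auto simp: h_def TT_nonneg\<close>)
    obtain a0 where a0: "a0 \<in> X" "f a0 = Mf" using Mf_in by auto
    obtain b0 where b0: "b0 \<in> Y" "g b0 = Mg" using Mg_in by auto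
    have sub2: "sumset (Af a0) (Bf b0) \<subseteq> restr D' ` S"
      using sub1[of a0 b0] unfolding fib_def by auto
    have E: "T \<le> TT D' S"
    proof -
      have "TT D' (sumset (Af a0) (Bf b0)) \<le> TT D' (restr D' ` S)"
        by (rule TT_mono[OF _ sub2]) (use fS in simp)
      moreover have "min (ft a0) (gt b0) = T" using a0 b0 th0 unfolding ft_def gt_def T_def by simp
      ultimately show ?thesis using IH[OF a0(1) b0(1)] TT_restr[of D' S] by linarith
    qed
    have sumf: "sum f X = real (card A)"
    proof -
      have "sum f X = (\<Sum>a\<in>X. real (card (fib A j a)))"
        unfolding f_def Af_def using card_restr_fib[OF sA] by simp
      also have "\<dots> = real (card A)" using card_fibers[OF fA, of j] unfolding X_def
        by (metis of_nat_sum)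
      finally show ?thesis .
    qed
    have sumg: "sum g Y = real (card B)"
    proof -
      have "sum g Y = (\<Sum>a\<in>Y. real (card (fib B j a)))"
        unfolding g_def Bf_def using card_restr_fib[OF sB] by simp
      also have "\<dots> = real (card B)" using card_fibers[OF fB, of j] unfolding Y_def
        by (metis of_nat_sum)
      finally show ?thesis .
    qed
    have sft: "sum ft X = real (card A) / th0 ^ k" unfolding ft_def using sumf by (simp add: sum_divide_distrib[symmetric])
    have sgt: "sum gt Y = real (card B) / (1 - th0) ^ k" unfolding gt_def using sumg by (simp add: sum_divide_distrib[symmetric])
    have split: "TT (insert j D') S = TT D' S + sum h ((\<lambda>x. x j) ` S)"
      unfolding h_def by (rule TT_split[OF insert(1,2) fS])
    have "min (real (card A) / th ^ Suc k) (real (card B) / (1 - th) ^ Suc k)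
          \<le> real (card A) / th0 ^ k + real (card B) / (1 - th0) ^ k"
      by (rule conv) (use th th0 in auto)
    also have "\<dots> \<le> TT (insert j D') S" using split lqa h2 E sft sgt by linarith
    finally show "min (real (card A) / th ^ card (insert j D')) (real (card B) / (1 - th) ^ card (insert j D'))
          \<le> TT (insert j D') (sumset A B)" unfolding cardD S_def .
  qed
qed



theorem lemma2p1:
  fixes b :: "'n::finite \<Rightarrow> real^'n"
    and A B :: "(real^'n) set"
  assumes "inj b" and "independent (range b)" and "span (range b) = UNIV"
    and "finite A" and "A \<noteq> {}" and "finite B" and "B \<noteq> {}"
  shows "real (card {a + c | a c. a \<in> A \<and> c \<in> B}) \<ge>
           (real (card A) powr (1 / real CARD('n)) + real (card B) powr (1 / real CARD('n))) ^ CARD('n)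
           - (\<Sum>I\<in>{I. I \<subset> (UNIV :: 'n set)}.
                real (card (basis_proj b I ` {a + c | a c. a \<in> A \<and> c \<in> B})))"
proof -
  note inj = assms(1) and ind = assms(2) and sp = assms(3)
  define cm :: "real^'n \<Rightarrow> ('n \<Rightarrow> real)" where "cm = (\<lambda>x i. representation (range b) x (b i))"
  define gm :: "('n \<Rightarrow> real) \<Rightarrow> real^'n" where "gm = (\<lambda>c. \<Sum>i\<in>UNIV. c i *\<^sub>R b i)"
  have insp: "x \<in> span (range b)" for x using sp by simp
  have gcm: "gm (cm x) = x" for x
  proof -
    have "gm (cm x) = (\<Sum>v\<in>range b. representation (range b) x v *\<^sub>R v)"
      unfolding gm_def cm_def using inj by (simp add: sum.reindex)
    also have "\<dots> = x" by (rule real_vector.sum_representation_eq) (use ind insp in auto)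
    finally show ?thesis .
  qed
  have cm_inj: "inj cm" by (metis gcm injI)
  have cm_add: "cm (x + y) = cm x + cm y" for x y
    unfolding cm_def using real_vector.representation_add[OF ind insp insp] by (simp add: fun_eq_iff)
  have gm_inj: "inj gm"
  proof (rule injI)
    fix c c' assume eq: "gm c = gm c'"
    define u where "u = (\<lambda>v. c (inv b v) - c' (inv b v))"
    have "(\<Sum>v\<in>range b. u v *\<^sub>R v) = (\<Sum>i\<in>UNIV. u (b i) *\<^sub>R b i)"
      using inj by (simp add: sum.reindex)
    also have "\<dots> = gm c - gm c'" unfolding gm_def u_def using inj
      by (simp add: scaleR_diff_left sum_subtractf)
    finally have z: "(\<Sum>v\<in>range b. u v *\<^sub>R v) = 0" using eq by simp
    show "c = c'"
    proof
      fix i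
      have "u (b i) = 0" by (rule real_vector.independentD[OF ind _ _ z]) auto
      thus "c i = c' i" unfolding u_def using inj by simp
    qed
  qed
  have bp: "basis_proj b I x = gm (restr I (cm x))" for I x
  proof -
    have "gm (restr I (cm x)) = (\<Sum>i\<in>UNIV. (if i \<in> I then cm x i *\<^sub>R b i else 0))"
      unfolding gm_def restr_def by (intro sum.cong refl) auto
    also have "\<dots> = (\<Sum>i\<in>I. cm x i *\<^sub>R b i)" by (simp add: sum.If_cases)
    finally show ?thesis unfolding basis_proj_def cm_def by simp
  qed
  define S where "S = {a + c | a c. a \<in> A \<and> c \<in> B}"
  define A' where "A' = cm ` A"
  define B' where "B' = cm ` B"
  define S' where "S' = sumset A' B'"
  have cmS: "cm ` S = S'"
  proof
    show "cm ` S \<subseteq> S'" unfolding S_def S'_def A'_def B'_def sumset_def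
      using cm_add by blast
    show "S' \<subseteq> cm ` S"
    proof
      fix z assume "z \<in> S'"
      then obtain a c where "a \<in> A" "c \<in> B" "z = cm a + cm c"
        unfolding S'_def A'_def B'_def sumset_def by blast
      hence "z = cm (a + c)" "a + c \<in> S" unfolding S_def by (auto simp: cm_add)
      thus "z \<in> cm ` S" by blast
    qed
  qed
  have cA: "card A' = card A" unfolding A'_def using cm_inj by (simp add: card_image inj_on_subset)
  have cB: "card B' = card B" unfolding B'_def using cm_inj by (simp add: card_image inj_on_subset)
  have cS: "card S = card S'" using cmS cm_inj by (metis card_image inj_on_subset subset_UNIV)
  have cP: "card (basis_proj b I ` S) = card (restr I ` S')" for I
  proof -
    have "basis_proj b I ` S = gm ` (restr I ` (cm ` S))" unfolding image_image using bp by simp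
    hence "basis_proj b I ` S = gm ` (restr I ` S')" using cmS by simp
    thus ?thesis using gm_inj by (simp add: card_image inj_on_subset)
  qed
  have fA': "finite A'" "finite B'" "A' \<noteq> {}" "B' \<noteq> {}" using assms A'_def B'_def by auto
  have suppU: "supp UNIV = UNIV" unfolding supp_def by auto
  have C: "\<forall>th. 0 < th \<longrightarrow> th < 1 \<longrightarrow>
        min (real (card A') / th ^ CARD('n)) (real (card B') / (1 - th) ^ CARD('n)) \<le> TT UNIV S'"
    using core[of "UNIV :: 'n set"] fA' suppU unfolding S'_def by auto
  have a0: "0 < real (card A)" "0 < real (card B)" using assms by auto
  define ra where "ra = real (card A) powr (1 / real CARD('n))"
  define rb where "rb = real (card B) powr (1 / real CARD('n))"
  have BAL: "0 < ra / (ra + rb) \<and> ra / (ra + rb) < 1 \<and>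
         real (card A) / (ra / (ra + rb)) ^ CARD('n) = (ra + rb) ^ CARD('n) \<and>
         real (card B) / (1 - ra / (ra + rb)) ^ CARD('n) = (ra + rb) ^ CARD('n)"
    unfolding ra_def rb_def by (rule bal[OF a0]) simp
  have main: "(ra + rb) ^ CARD('n) \<le> TT UNIV S'"
    using C[rule_format, of "ra / (ra + rb)"] BAL cA cB by simp
  have PU: "Pow (UNIV :: 'n set) = insert UNIV {I. I \<subset> UNIV}" by auto
  have TTs: "TT UNIV S' = real (card S') + (\<Sum>I\<in>{I. I \<subset> (UNIV :: 'n set)}. real (card (restr I ` S')))"
  proof -
    have "restr UNIV ` S' = S'" unfolding restr_def by simp
    thus ?thesis unfolding TT_def PU by (simp add: sum.insert)
  qed
  show ?thesis
    using main TTs cS cP unfolding S_def[symmetric] ra_def rb_def by simp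
qed


end
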